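(* Let $p$ be a prime and $D$ an integer with $1 \le D \le p-1$. Let $k\ge 1$ and let $A_1,\dots,A_k \subseteq \mathbb{Z}_p$ be $D$-APs. Then the sumset $\sum_{i=1}^k A_i$ is contiguous relative to $D$.
   Context: $\mathbb{Z}_p=\{0,\dots,p-1\}$ under addition mod $p$. Sumset: $\sum_{i=1}^k A_i = \{a_1+\dots+a_k \bmod p : a_i\in A_i\}$. For $b\in\{0,\dots,D-1\}$, the $D$-AP with base $b$ is $A_{(b)}=\{b+iD : i \text{ integer},\ 0\le i\le \lfloor (p-1-b)/D\rfloor\}\subseteq\mathbb{Z}_p$; a $D$-AP is any set of this form. For $g_0,g_1\in\mathbb{Z}_p$, $\mathrm{dist}_{p,D}(g_0,g_1)=\min\{(g_1-g_0)D^{-1}\bmod p,\ (g_0-g_1)D^{-1}\bmod p\}$, each term viewed as an integer in $\{0,\dots,p-1\}$. A set $A\subseteq\mathbb{Z}_p$ is contiguous relative to $D$ if its elements can be listed as $a_1,\dots,a_m$ (each element exactly once) with $\mathrm{dist}_{p,D}(a_j,a_{j+1})=1$ for all $1\le j<m$; a one-element set is contiguous. *)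

theory Defs
  imports "HOL-Number_Theory.Number_Theory"
begin

text \<open>Elements of Z_p are represented as natural numbers in {0..<p}.\<close>

definition D_AP :: "nat \<Rightarrow> nat \<Rightarrow> nat \<Rightarrow> nat set" where
  "D_AP p D b = {b + i * D | i. i \<le> (p - 1 - b) div D}"

definition is_D_AP :: "nat \<Rightarrow> nat \<Rightarrow> nat set \<Rightarrow> bool" where
  "is_D_AP p D A \<longleftrightarrow> (\<exists>b<D. A = D_AP p D b)"

fun sumset :: "nat \<Rightarrow> (nat \<Rightarrow> nat set) \<Rightarrow> nat \<Rightarrow> nat set" where
  "sumset p A 0 = {0}"
| "sumset p A (Suc k) = {(s + a) mod p | s a. s \<in> sumset p A k \<and> a \<in> A (Suc k)}"

text \<open>(g mod p) * D^{-1} mod p, as the unique residue x in {0..<p} with x*D = g (mod p).\<close>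
definition divD :: "nat \<Rightarrow> nat \<Rightarrow> int \<Rightarrow> nat" where
  "divD p D g = (THE x. x < p \<and> [int x * int D = g] (mod int p))"

definition dist_pD :: "nat \<Rightarrow> nat \<Rightarrow> nat \<Rightarrow> nat \<Rightarrow> nat" where
  "dist_pD p D g0 g1 = min (divD p D (int g1 - int g0)) (divD p D (int g0 - int g1))"

definition contiguous :: "nat \<Rightarrow> nat \<Rightarrow> nat set \<Rightarrow> bool" where
  "contiguous p D A \<longleftrightarrow> (\<exists>xs. distinct xs \<and> set xs = A \<and>
      (\<forall>j. Suc j < length xs \<longrightarrow> dist_pD p D (xs ! j) (xs ! Suc j) = 1))"

end

theory Submission
  imports Defs
begin

lemma divD_eq:
  assumes cop: "coprime (int D) (int p)" and xp: "x < p"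
    and c: "[int x * int D = g] (mod int p)"
  shows "divD p D g = x"
  unfolding divD_def
proof (rule the_equality)
  show "x < p \<and> [int x * int D = g] (mod int p)" using xp c by simp
next
  fix y assume y: "y < p \<and> [int y * int D = g] (mod int p)"
  hence "[int y * int D = int x * int D] (mod int p)"
    using c by (meson cong_sym cong_trans)
  hence "[int y = int x] (mod int p)" using cop by (simp add: cong_mult_rcancel)
  hence "int y = int x" using y xp by (intro cong_less_imp_eq_int) auto
  thus "y = x" by simp
qed

definition cyc :: "nat \<Rightarrow> nat \<Rightarrow> nat \<Rightarrow> nat \<Rightarrow> nat set" where
  "cyc p D c n = {(c + t * D) mod p | t. t < n}"

lemma cyc_min:
  assumes "p > 0"
  shows "cyc p D c N = cyc p D c (min N p)"
proof
  show "cyc p D c N \<subseteq> cyc p D c (min N p)"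
  proof
    fix x assume "x \<in> cyc p D c N"
    then obtain t where t: "t < N" "x = (c + t * D) mod p" unfolding cyc_def by auto
    have "x = (c + (t mod p) * D) mod p" unfolding t(2)
      by (metis mod_add_right_eq mod_mult_left_eq)
    moreover have "t mod p < min N p" using t(1) assms
      by (metis min_less_iff_conj mod_less_divisor mod_less_eq_dividend order_le_less_trans)
    ultimately show "x \<in> cyc p D c (min N p)" unfolding cyc_def by auto
  qed
next
  show "cyc p D c (min N p) \<subseteq> cyc p D c N" unfolding cyc_def by auto
qed

lemma cyc_sum:
  assumes "n \<ge> 1" "m \<ge> 1"
  shows "{(s + a) mod p | s a. s \<in> cyc p D c n \<and> a \<in> cyc p D b m}
       = cyc p D (c + b) (n + m - 1)"
proof
  show "{(s + a) mod p | s a. s \<in> cyc p D c n \<and> a \<in> cyc p D b m} \<subseteq> cyc p D (c + b) (n + m - 1)"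
  proof
    fix x assume "x \<in> {(s + a) mod p | s a. s \<in> cyc p D c n \<and> a \<in> cyc p D b m}"
    then obtain j i where ji: "j < n" "i < m"
      "x = ((c + j * D) mod p + (b + i * D) mod p) mod p" unfolding cyc_def by auto
    have eq: "c + j * D + (b + i * D) = c + b + (j + i) * D" by (simp add: algebra_simps)
    have "x = (c + b + (j + i) * D) mod p" unfolding ji(3)
      by (simp only: mod_add_eq eq)
    moreover have "j + i < n + m - 1" using ji by auto
    ultimately show "x \<in> cyc p D (c + b) (n + m - 1)" unfolding cyc_def by auto
  qed
next
  show "cyc p D (c + b) (n + m - 1) \<subseteq> {(s + a) mod p | s a. s \<in> cyc p D c n \<and> a \<in> cyc p D b m}"
  proof
    fix x assume "x \<in> cyc p D (c + b) (n + m - 1)"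
    then obtain t where t: "t < n + m - 1" "x = (c + b + t * D) mod p" unfolding cyc_def by auto
    define j where "j = min t (n - 1)"
    define i where "i = t - j"
    have ji: "j < n" "i < m" "t = j + i" using t(1) assms unfolding i_def j_def by auto
    have eq: "c + j * D + (b + i * D) = c + b + (j + i) * D" by (simp add: algebra_simps)
    have "x = ((c + j * D) mod p + (b + i * D) mod p) mod p" unfolding t(2) ji(3)
      by (simp only: mod_add_eq eq)
    moreover have "(c + j * D) mod p \<in> cyc p D c n" using ji unfolding cyc_def by auto
    moreover have "(b + i * D) mod p \<in> cyc p D b m" using ji unfolding cyc_def by auto
    ultimately show "x \<in> {(s + a) mod p | s a. s \<in> cyc p D c n \<and> a \<in> cyc p D b m}"
      by blast
  qed
qed

lemma DAP_cyc:
  assumes "b < D" "1 \<le> D" "D \<le> p - 1"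
  shows "D_AP p D b = cyc p D b ((p - 1 - b) div D + 1)"
proof -
  have "b + i * D < p" if "i \<le> (p - 1 - b) div D" for i
  proof -
    have "i * D \<le> (p - 1 - b) div D * D" using that by simp
    also have "\<dots> \<le> p - 1 - b" by simp
    finally show ?thesis using assms by linarith
  qed
  thus ?thesis unfolding D_AP_def cyc_def
    by (auto simp: less_Suc_eq_le) (metis less_Suc_eq_le mod_less)+
qed

lemma sumset_cyc:
  assumes "p > 0" "1 \<le> D" "D \<le> p - 1"
    and "\<And>i. 1 \<le> i \<Longrightarrow> i \<le> k \<Longrightarrow> is_D_AP p D (A i)"
  shows "\<exists>c n. 1 \<le> n \<and> n \<le> p \<and> sumset p A k = cyc p D c n"
  using assms(4)
proof (induction k)
  case 0
  have "sumset p A 0 = cyc p D 0 1" unfolding cyc_def by auto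
  moreover have "1 \<le> (1::nat)" "1 \<le> p" using assms(1) by auto
  ultimately show ?case by blast
next
  case (Suc k)
  have "\<And>i. 1 \<le> i \<Longrightarrow> i \<le> k \<Longrightarrow> is_D_AP p D (A i)" using Suc.prems le_SucI by blast
  then obtain c n where cn: "1 \<le> n" "n \<le> p" "sumset p A k = cyc p D c n" using Suc.IH by blast
  obtain b where b: "b < D" "A (Suc k) = D_AP p D b"
    using Suc.prems[of "Suc k"] unfolding is_D_AP_def by auto
  define m where "m = (p - 1 - b) div D + 1"
  have "sumset p A (Suc k) = cyc p D (c + b) (n + m - 1)"
    using cyc_sum[of n m p D c b] cn b DAP_cyc[OF b(1) assms(2,3)]
    unfolding m_def by simp
  also have "\<dots> = cyc p D (c + b) (min (n + m - 1) p)" using cyc_min assms by blast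
  finally have "sumset p A (Suc k) = cyc p D (c + b) (min (n + m - 1) p)" .
  moreover have "1 \<le> min (n + m - 1) p" "min (n + m - 1) p \<le> p" using cn assms(1) unfolding m_def by auto
  ultimately show ?case by blast
qed

lemma aux1:
  assumes "p > 0"
  shows "[int 1 * int D = int ((x + D) mod p) - int (x mod p)] (mod int p)"
proof -
  have "int ((x + D) mod p) - int (x mod p) = (int x + int D) mod int p - int x mod int p"
    by (simp add: of_nat_mod)
  thus ?thesis unfolding cong_def by (simp add: mod_diff_eq)
qed

lemma aux2:
  assumes "p > 0"
  shows "[int (p - 1) * int D = int (x mod p) - int ((x + D) mod p)] (mod int p)"
proof -
  have "int (x mod p) - int ((x + D) mod p) = int x mod int p - (int x + int D) mod int p"
    by (simp add: of_nat_mod)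
  moreover have "int (p - 1) * int D = int p * int D + (int x - (int x + int D))"
    using assms by (simp add: of_nat_diff algebra_simps)
  moreover have "(int p * int D + (int x - (int x + int D))) mod int p
      = (int x - (int x + int D)) mod int p" by (rule mod_mult_self4)
  moreover have "(int x mod int p - (int x + int D) mod int p) mod int p
      = (int x - (int x + int D)) mod int p" by (rule mod_diff_eq)
  ultimately show ?thesis unfolding cong_def by presburger
qed

theorem lemma2p6:
  fixes p D k :: nat and A :: "nat \<Rightarrow> nat set"
  assumes "prime p" and "1 \<le> D" and "D \<le> p - 1" and "k \<ge> 1"
    and "\<And>i. 1 \<le> i \<Longrightarrow> i \<le> k \<Longrightarrow> is_D_AP p D (A i)"
  shows "contiguous p D (sumset p A k)"
proof -
  have p2: "p \<ge> 2" using assms(1) prime_ge_2_nat by blast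
  hence p0: "p > 0" by simp
  have "\<not> p dvd D" using assms(2,3) p2 by (auto dest: dvd_imp_le)
  hence copn: "coprime D p" using assms(1) by (metis coprime_commute prime_imp_coprime)
  hence cop: "coprime (int D) (int p)" by simp
  have ex: "\<exists>c n. 1 \<le> n \<and> n \<le> p \<and> sumset p A k = cyc p D c n"
    by (rule sumset_cyc[OF p0 assms(2,3)]) (rule assms(5))
  then obtain c n where cn: "1 \<le> n" "n \<le> p" "sumset p A k = cyc p D c n"
    by blast
  define xs where "xs = map (\<lambda>t. (c + t * D) mod p) [0..<n]"
  have "set xs = sumset p A k" unfolding xs_def cn(3) cyc_def by auto
  moreover have "distinct xs" unfolding xs_def distinct_map
  proof
    show "inj_on (\<lambda>t. (c + t * D) mod p) (set [0..<n])"
    proof (rule inj_onI)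
      fix t1 t2 assume t: "t1 \<in> set [0..<n]" "t2 \<in> set [0..<n]"
        "(c + t1 * D) mod p = (c + t2 * D) mod p"
      have "[c + t1 * D = c + t2 * D] (mod p)" using t(3) by (simp add: cong_def)
      hence "[t1 * D = t2 * D] (mod p)" by (simp add: cong_add_lcancel_nat)
      hence "[t1 = t2] (mod p)" using copn by (simp add: cong_mult_rcancel_nat)
      thus "t1 = t2" using t cn(2) by (intro cong_less_imp_eq_nat) auto
    qed
  qed simp
  moreover have "\<forall>j. Suc j < length xs \<longrightarrow> dist_pD p D (xs ! j) (xs ! Suc j) = 1"
  proof (intro allI impI)
    fix j assume j: "Suc j < length xs"
    have e: "xs ! j = (c + j * D) mod p" "xs ! Suc j = ((c + j * D) + D) mod p"
      using j unfolding xs_def by (auto simp: algebra_simps)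
    have "divD p D (int (xs ! Suc j) - int (xs ! j)) = 1"
      unfolding e by (rule divD_eq[OF cop]) (use p2 aux1[OF p0] in auto)
    moreover have "divD p D (int (xs ! j) - int (xs ! Suc j)) = p - 1"
      unfolding e by (rule divD_eq[OF cop]) (use p2 aux2[OF p0] in auto)
    ultimately show "dist_pD p D (xs ! j) (xs ! Suc j) = 1"
      unfolding dist_pD_def using p2 by simp
  qed
  ultimately show ?thesis unfolding contiguous_def by blast
qed

end
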